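(* Let $n\in\mathbb{N}$ and let $f_1,\ldots,f_n$ be Alpert multiwavelets of multiplicity $n$. Then there is a nonzero real constant $\lambda$ such that, for almost every $x\in[-1,1]$, \[ f_n(x)=\lambda\bigl(A_{n,n}(x)\chi_{[-1,0)}(x)+B_{n,n}(x)\chi_{[0,1)}(x)\bigr), \] where $(A_{n,n},B_{n,n})$ is the type I Legendre–Angelesco multiple orthogonal polynomial for the multi-index $(n,n)$.
   Context: Alpert multiwavelets of multiplicity $n\in\mathbb{N}$: real functions $f_1,\ldots,f_n$ supported on $[-1,1]$ such that (i) the restriction of each $f_i$ to $(0,1)$ is a polynomial of degree at most $n-1$; (ii) $f_k(-t)=(-1)^{k+n-1}f_k(t)$ for $t\in(0,1)$; (iii) $\int_{-1}^1 f_i(t)f_j(t)\,dt=\delta_{i,j}$ for $1\le i,j\le n$; (iv) $\int_{-1}^1 f_k(t)t^i\,dt=0$ for $i=0,1,\ldots,k+n-2$. Type I Legendre–Angelesco polynomials: for integers $n,m\ge 0$ with $n+m\ge1$, $(A_{n,m},B_{n,m})$ is the unique pair of polynomials with $\deg A_{n,m}\le n-1$, $\deg B_{n,m}\le m-1$ (degree $\le -1$ meaning the zero polynomial) such that, writing $Q_{n,m}=A_{n,m}\chi_{[-1,0]}+B_{n,m}\chi_{[0,1]}$, one has $\int_{-1}^1 Q_{n,m}(x)x^k\,dx=0$ for $0\le k\le n+m-2$ and $\int_{-1}^1 Q_{n,m}(x)x^{n+m-1}\,dx=1$. *)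

theory Defs
  imports "HOL-Analysis.Analysis" "HOL-Computational_Algebra.Polynomial"
begin

definition alpert_multiwavelets :: "nat \<Rightarrow> (nat \<Rightarrow> real \<Rightarrow> real) \<Rightarrow> bool" where
  "alpert_multiwavelets n f \<longleftrightarrow>
     (\<forall>i\<in>{1..n}. \<forall>t. t \<notin> {-1..1} \<longrightarrow> f i t = 0) \<and>
     (\<forall>i\<in>{1..n}. \<exists>p :: real poly. (p = 0 \<or> degree p \<le> n - 1) \<and>
                  (\<forall>t\<in>{0<..<1}. f i t = poly p t)) \<and>
     (\<forall>k\<in>{1..n}. \<forall>t\<in>{0<..<1}. f k (-t) = (-1) ^ (k + n - 1) * f k t) \<and>
     (\<forall>i\<in>{1..n}. \<forall>j\<in>{1..n}.
        integral {-1..1} (\<lambda>t. f i t * f j t) = (if i = j then 1 else 0)) \<and>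
     (\<forall>k\<in>{1..n}. \<forall>i\<le>k + n - 2. integral {-1..1} (\<lambda>t. f k t * t ^ i) = 0)"

text \<open>Type I Legendre--Angelesco pair: deg A \<le> n-1, deg B \<le> m-1 (degree \<le> -1 means zero).\<close>
definition LA_Q :: "real poly \<Rightarrow> real poly \<Rightarrow> real \<Rightarrow> real" where
  "LA_Q A B x = poly A x * indicator {-1..0} x + poly B x * indicator {0..1} x"

definition LA_typeI :: "nat \<Rightarrow> nat \<Rightarrow> real poly \<Rightarrow> real poly \<Rightarrow> bool" where
  "LA_typeI n m A B \<longleftrightarrow>
     (A = 0 \<or> degree A < n) \<and> (B = 0 \<or> degree B < m) \<and>
     (\<forall>k. k + 2 \<le> n + m \<longrightarrow> integral {-1..1} (\<lambda>x. LA_Q A B x * x ^ k) = 0) \<and>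
     integral {-1..1} (\<lambda>x. LA_Q A B x * x ^ (n + m - 1)) = 1"

definition LA_A :: "nat \<Rightarrow> nat \<Rightarrow> real poly" where
  "LA_A n m = fst (THE AB. LA_typeI n m (fst AB) (snd AB))"

definition LA_B :: "nat \<Rightarrow> nat \<Rightarrow> real poly" where
  "LA_B n m = snd (THE AB. LA_typeI n m (fst AB) (snd AB))"

end

theory Submission imports Defs begin

lemma cauchy_kernel:
  fixes d :: "nat \<Rightarrow> real" and kk :: "nat \<Rightarrow> nat"
  assumes inj: "inj_on kk {..<n}"
    and z: "\<And>j. j < n \<Longrightarrow> (\<Sum>i<n. d i / real (i + kk j + 1)) = 0"
    and "m < n"
  shows "d m = 0"
proof -
  define P :: "real poly" where
    "P = (\<Sum>i<n. smult (d i) (\<Prod>l\<in>{..<n}-{i}. [:real l + 1, 1:]))"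
  have evP: "poly P x = (\<Sum>i<n. d i * (\<Prod>l\<in>{..<n}-{i}. x + real l + 1))" for x
    by (simp add: P_def poly_sum poly_prod algebra_simps)
  have degP: "degree P < n"
  proof -
    have "degree P \<le> n - 1"
      unfolding P_def
    proof (intro degree_sum_le)
      fix i assume i: "i \<in> {..<n}"
      have "degree (smult (d i) (\<Prod>l\<in>{..<n}-{i}. [:real l + 1, 1:])) \<le> degree (\<Prod>l\<in>{..<n}-{i}. [:real l + 1, 1:]::real poly)"
        by (rule degree_smult_le)
      also have "\<dots> \<le> sum (degree \<circ> (\<lambda>l. [:real l + 1, 1:]::real poly)) ({..<n}-{i})"
        by (rule degree_prod_sum_le) simp
      also have "\<dots> = card ({..<n}-{i})" by simp
      also have "\<dots> = n - 1" using i by simp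
      finally show "degree (smult (d i) (\<Prod>l\<in>{..<n}-{i}. [:real l + 1, 1:])) \<le> n - 1" .
    qed simp
    thus ?thesis using \<open>m < n\<close> by linarith
  qed
  have roots: "poly P (real (kk j)) = poly 0 (real (kk j))" if j: "j < n" for j
  proof -
    let ?x = "real (kk j)"
    have "poly P ?x = (\<Sum>i<n. d i / real (i + kk j + 1) * (\<Prod>l<n. ?x + real l + 1))"
      unfolding evP
    proof (intro sum.cong refl)
      fix i assume i: "i \<in> {..<n}"
      have "(\<Prod>l<n. ?x + real l + 1) = (?x + real i + 1) * (\<Prod>l\<in>{..<n}-{i}. ?x + real l + 1)"
        using i by (subst prod.remove[of _ i]) auto
      moreover have "?x + real i + 1 > 0" by simp
      ultimately show "d i * (\<Prod>l\<in>{..<n}-{i}. ?x + real l + 1) = d i / real (i + kk j + 1) * (\<Prod>l<n. ?x + real l + 1)"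
        by (simp add: field_simps)
    qed
    also have "\<dots> = (\<Sum>i<n. d i / real (i + kk j + 1)) * (\<Prod>l<n. ?x + real l + 1)"
      by (simp add: sum_distrib_right)
    also have "\<dots> = 0" using z[OF j] by simp
    finally show ?thesis by simp
  qed
  have "P = 0"
  proof (rule poly_eqI_degree[of "(\<lambda>j. real (kk j)) ` {..<n}"])
    show "\<And>x. x \<in> (\<lambda>j. real (kk j)) ` {..<n} \<Longrightarrow> poly P x = poly 0 x" using roots by auto
    have "card ((\<lambda>j. real (kk j)) ` {..<n}) = n"
      using inj by (subst card_image) (auto simp: inj_on_def)
    thus "degree P < card ((\<lambda>j. real (kk j)) ` {..<n})" "degree 0 < card ((\<lambda>j. real (kk j)) ` {..<n})"
      using degP \<open>m<n\<close> by auto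
  qed
  hence "poly P (- real m - 1) = 0" by simp
  also have "poly P (- real m - 1) = d m * (\<Prod>l\<in>{..<n}-{m}. - real m - 1 + real l + 1)"
    unfolding evP
  proof (subst sum.remove[of _ m])
    show "d m * prod (\<lambda>l. - real m - 1 + real l + 1) ({..<n} - {m}) +
      (\<Sum>i\<in>{..<n} - {m}. d i * prod (\<lambda>l. - real m - 1 + real l + 1) ({..<n} - {i})) =
      d m * (\<Prod>l\<in>{..<n} - {m}. - real m - 1 + real l + 1)"
    proof -
      have "(\<Sum>i\<in>{..<n} - {m}. d i * prod (\<lambda>l. - real m - 1 + real l + 1) ({..<n} - {i})) = 0"
      proof (intro sum.neutral ballI)
        fix i assume "i \<in> {..<n} - {m}"
        hence "m \<in> {..<n} - {i}" using \<open>m<n\<close> by auto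
        hence "prod (\<lambda>l. - real m - 1 + real l + 1) ({..<n} - {i}) = 0"
          by (intro prod_zero) auto
        thus "d i * prod (\<lambda>l. - real m - 1 + real l + 1) ({..<n} - {i}) = 0" by simp
      qed
      thus ?thesis by simp
    qed
  qed (use \<open>m<n\<close> in auto)
  finally have "d m * (\<Prod>l\<in>{..<n}-{m}. - real m - 1 + real l + 1) = 0" .
  moreover have "(\<Prod>l\<in>{..<n}-{m}. - real m - 1 + real l + 1) \<noteq> 0"
    by (subst prod_zero_iff) auto
  ultimately show ?thesis by simp
qed


definition Mom :: "nat \<Rightarrow> real poly \<Rightarrow> real poly \<Rightarrow> nat \<Rightarrow> real" where
  "Mom n A B k = (\<Sum>i<n. (coeff A i * (-1)^(i+k) + coeff B i) / real (i + k + 1))"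

lemma pow_has_integral:
  fixes a b :: real assumes "a \<le> b"
  shows "((\<lambda>x. x ^ m) has_integral (b^(m+1) - a^(m+1)) / real (m+1)) {a..b}"
proof -
  have "((\<lambda>x. x ^ m) has_integral (\<lambda>x. x^(m+1) / real (m+1)) b - (\<lambda>x. x^(m+1) / real (m+1)) a) {a..b}"
    apply (intro fundamental_theorem_of_calculus assms)
    apply (auto intro!: derivative_eq_intros simp: has_real_derivative_iff_has_vector_derivative[symmetric])
    apply (cases m)
     apply (auto simp: field_simps)
    done
  thus ?thesis by (simp add: diff_divide_distrib)
qed

lemma poly_sum_lt:
  assumes "degree (q::real poly) < n"
  shows "poly q x = (\<Sum>i<n. coeff q i * x ^ i)"
proof -
  have "poly q x = (\<Sum>i\<le>degree q. coeff q i * x ^ i)" by (simp add: poly_altdef)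
  also have "\<dots> = (\<Sum>i<n. coeff q i * x ^ i)"
    using assms by (intro sum.mono_neutral_left) (auto simp: coeff_eq_0)
  finally show ?thesis .
qed

lemma mom_has_integral:
  assumes dA: "degree A < n" and dB: "degree B < n"
  shows "((\<lambda>x. LA_Q A B x * x ^ k) has_integral Mom n A B k) {-1..1}"
proof -
  have hA: "((\<lambda>x. poly A x * x ^ k) has_integral (\<Sum>i<n. coeff A i * (-1)^(i+k) / real (i+k+1))) {-1..0}"
  proof -
    have "((\<lambda>x. \<Sum>i<n. coeff A i * x ^ (i+k)) has_integral (\<Sum>i<n. coeff A i * ((0^(i+k+1) - (-1)^(i+k+1)) / real (i+k+1)))) {-1..0}"
      by (intro has_integral_sum has_integral_mult_right pow_has_integral) auto
    moreover have "(\<lambda>x. \<Sum>i<n. coeff A i * x ^ (i+k)) = (\<lambda>x. poly A x * x ^ k)"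
      by (auto simp: poly_sum_lt[OF dA] sum_distrib_right power_add mult.assoc)
    moreover have "(\<Sum>i<n. coeff A i * ((0^(i+k+1) - (-1)^(i+k+1)) / real (i+k+1))) = (\<Sum>i<n. coeff A i * (-1)^(i+k) / real (i+k+1))"
      by (intro sum.cong refl) auto
    ultimately show ?thesis by simp
  qed
  have hB: "((\<lambda>x. poly B x * x ^ k) has_integral (\<Sum>i<n. coeff B i / real (i+k+1))) {0..1}"
  proof -
    have "((\<lambda>x. \<Sum>i<n. coeff B i * x ^ (i+k)) has_integral (\<Sum>i<n. coeff B i * ((1^(i+k+1) - 0^(i+k+1)) / real (i+k+1)))) {0..1}"
      by (intro has_integral_sum has_integral_mult_right pow_has_integral) auto
    moreover have "(\<lambda>x. \<Sum>i<n. coeff B i * x ^ (i+k)) = (\<lambda>x. poly B x * x ^ k)"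
      by (auto simp: poly_sum_lt[OF dB] sum_distrib_right power_add mult.assoc)
    ultimately show ?thesis by simp
  qed
  have hA': "((\<lambda>x. LA_Q A B x * x ^ k) has_integral (\<Sum>i<n. coeff A i * (-1)^(i+k) / real (i+k+1))) {-1..0}"
    by (rule has_integral_spike_finite[OF _ _ hA, of "{0}"]) (auto simp: LA_Q_def)
  have hB': "((\<lambda>x. LA_Q A B x * x ^ k) has_integral (\<Sum>i<n. coeff B i / real (i+k+1))) {0..1}"
    by (rule has_integral_spike_finite[OF _ _ hB, of "{0}"]) (auto simp: LA_Q_def)
  have "((\<lambda>x. LA_Q A B x * x ^ k) has_integral (\<Sum>i<n. coeff A i * (-1)^(i+k) / real (i+k+1)) + (\<Sum>i<n. coeff B i / real (i+k+1))) {-1..1}"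
    by (rule has_integral_combine[OF _ _ hA' hB']) auto
  thus ?thesis by (simp add: Mom_def sum.distrib[symmetric] add_divide_distrib)
qed

lemma mom_kernel:
  assumes dA: "degree A < n" and dB: "degree B < n"
    and z: "\<And>k. k < 2*n \<Longrightarrow> Mom n A B k = 0"
  shows "A = 0 \<and> B = 0"
proof -
  have e: "coeff A i * (-1)^i + coeff B i = 0" if "i < n" for i
  proof (rule cauchy_kernel[of "\<lambda>j. 2*j" n _ i])
    show "inj_on (\<lambda>j. 2*j) {..<n}" by (auto simp: inj_on_def)
    fix j assume "j < n"
    hence "Mom n A B (2*j) = 0" using z by auto
    thus "(\<Sum>i<n. (coeff A i * (-1)^i + coeff B i) / real (i + 2*j + 1)) = 0"
      by (simp add: Mom_def power_add)
  qed (use that in auto)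
  have o: "coeff B i - coeff A i * (-1)^i = 0" if "i < n" for i
  proof (rule cauchy_kernel[of "\<lambda>j. 2*j+1" n _ i])
    show "inj_on (\<lambda>j. 2*j+1) {..<n}" by (auto simp: inj_on_def)
    fix j assume "j < n"
    hence "Mom n A B (2*j+1) = 0" using z by auto
    thus "(\<Sum>i<n. (coeff B i - coeff A i * (-1)^i) / real (i + (2*j+1) + 1)) = 0"
      by (simp add: Mom_def power_add)
  qed (use that in auto)
  have cA: "coeff A i = 0" for i
  proof (cases "i < n")
    case True
    hence "coeff A i * (-1)^i = 0" using e[OF True] o[OF True] by linarith
    thus ?thesis by simp
  qed (use dA in \<open>auto simp: coeff_eq_0\<close>)
  have cB: "coeff B i = 0" for i
  proof (cases "i < n")
    case True
    thus ?thesis using e[OF True] cA by simp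
  qed (use dB in \<open>auto simp: coeff_eq_0\<close>)
  show ?thesis using cA cB by (auto intro: poly_eqI)
qed


lemma LA_typeI_iff:
  assumes "n \<ge> 1"
  shows "LA_typeI n n A B \<longleftrightarrow> degree A < n \<and> degree B < n \<and>
     (\<forall>k. k + 2 \<le> 2*n \<longrightarrow> Mom n A B k = 0) \<and> Mom n A B (2*n-1) = 1"
proof -
  have dA: "(A = 0 \<or> degree A < n) \<longleftrightarrow> degree A < n" using assms by auto
  have dB: "(B = 0 \<or> degree B < n) \<longleftrightarrow> degree B < n" using assms by auto
  show ?thesis
  proof (cases "degree A < n \<and> degree B < n")
    case True
    hence I: "integral {-1..1} (\<lambda>x. LA_Q A B x * x ^ k) = Mom n A B k" for k
      using mom_has_integral by (intro integral_unique) auto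
    show ?thesis unfolding LA_typeI_def dA dB I using True by (simp add: mult_2)
  next
    case False
    thus ?thesis unfolding LA_typeI_def dA dB by auto
  qed
qed

lemma Mom_diff: "Mom n (A - A') (B - B') k = Mom n A B k - Mom n A' B' k"
  by (simp add: Mom_def sum_subtractf[symmetric] diff_divide_distrib[symmetric] algebra_simps)

lemma Mom_smult: "Mom n (smult c A) (smult c B) k = c * Mom n A B k"
  by (simp add: Mom_def sum_distrib_left algebra_simps)

lemma LA_unique:
  assumes "n \<ge> 1" "LA_typeI n n A B" "LA_typeI n n A' B'"
  shows "A = A' \<and> B = B'"
proof -
  have "A - A' = 0 \<and> B - B' = 0"
  proof (rule mom_kernel[of _ n])
    show "degree (A - A') < n" "degree (B - B') < n"
      using assms LA_typeI_iff[OF assms(1)]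
      by (auto intro: le_less_trans[OF degree_diff_le_max])
    fix k assume k: "k < 2*n"
    show "Mom n (A - A') (B - B') k = 0"
    proof (cases "k + 2 \<le> 2*n")
      case True thus ?thesis using assms LA_typeI_iff[OF assms(1)] by (simp add: Mom_diff)
    next
      case False hence "k = 2*n-1" using k by auto
      thus ?thesis using assms LA_typeI_iff[OF assms(1)] by (simp add: Mom_diff)
    qed
  qed
  thus ?thesis by simp
qed

theorem proposition1:
  fixes n :: nat and f :: "nat \<Rightarrow> real \<Rightarrow> real"
  assumes "n \<ge> 1"
    and "alpert_multiwavelets n f"
  shows "\<exists>c::real. c \<noteq> 0 \<and>
           (AE x in lborel. x \<in> {-1..1} \<longrightarrow>
              f n x = c * (poly (LA_A n n) x * indicator {-1..<0} x
                           + poly (LA_B n n) x * indicator {0..<1} x))"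
proof -
  note n = assms(1)
  have nn: "n \<in> {1..n}" using n by auto
  note al = assms(2)[unfolded alpert_multiwavelets_def]
  from al have al2: "\<forall>i\<in>{1..n}. \<exists>p :: real poly. (p = 0 \<or> degree p \<le> n - 1) \<and>
                  (\<forall>t\<in>{0<..<1}. f i t = poly p t)" by (elim conjE)
  from al have al3: "\<forall>k\<in>{1..n}. \<forall>t\<in>{0<..<1}. f k (-t) = (-1) ^ (k + n - 1) * f k t" by (elim conjE)
  from al have al4: "\<forall>i\<in>{1..n}. \<forall>j\<in>{1..n}.
        integral {-1..1} (\<lambda>t. f i t * f j t) = (if i = j then 1 else 0)" by (elim conjE)
  from al have al5: "\<forall>k\<in>{1..n}. \<forall>i\<le>k + n - 2. integral {-1..1} (\<lambda>t. f k t * t ^ i) = 0" by (elim conjE)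
  from al2 nn obtain p :: "real poly" where p0: "p = 0 \<or> degree p \<le> n - 1"
    and fp: "\<And>t. t \<in> {0<..<1} \<Longrightarrow> f n t = poly p t" by blast
  have dp: "degree p < n" using p0 n by auto
  have odd: "(-1::real) ^ (n + n - 1) = -1"
  proof -
    obtain m where "n = Suc m" using n by (cases n) auto
    hence "n + n - 1 = Suc (2*m)" by simp
    thus ?thesis by (simp add: power_mult)
  qed
  have sym: "\<And>t. t \<in> {0<..<1} \<Longrightarrow> f n (-t) = - f n t"
    using al3 nn odd by (metis mult_minus1)
  have ortho: "\<And>i. i \<le> n + n - 2 \<Longrightarrow> integral {-1..1} (\<lambda>t. f n t * t ^ i) = 0"
    using al5 nn by blast
  have norm: "integral {-1..1} (\<lambda>t. f n t * f n t) = 1"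
    using al4 nn by simp
  define B where "B = p"
  define A where "A = - pcompose p [:0, -1:]"
  have polyA: "poly A x = - poly p (-x)" for x by (simp add: A_def poly_pcompose)
  have dA: "degree A < n" using dp by (simp add: A_def degree_pcompose)
  have dB: "degree B < n" using dp by (simp add: B_def)
  have fQ: "f n x = LA_Q A B x" if "x \<in> {-1..1} - {-1,0,1}" for x
  proof (cases "x > 0")
    case True
    with that show ?thesis by (auto simp: LA_Q_def fp B_def)
  next
    case False
    with that have "-x \<in> {0<..<1}" by auto
    from sym[OF this] fp[OF this] have "f n x = - poly p (-x)" by simp
    with False that show ?thesis by (auto simp: LA_Q_def polyA)
  qed
  have momf: "integral {-1..1} (\<lambda>t. f n t * t ^ k) = Mom n A B k" for k
  proof -
    have "integral {-1..1} (\<lambda>t. f n t * t ^ k) = integral {-1..1} (\<lambda>t. LA_Q A B t * t ^ k)"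
      by (rule integral_spike[of "{-1,0,1}"]) (auto simp: fQ)
    also have "\<dots> = Mom n A B k"
      by (rule integral_unique[OF mom_has_integral[OF dA dB]])
    finally show ?thesis .
  qed
  define \<mu> where "\<mu> = Mom n A B (2*n-1)"
  have low: "Mom n A B k = 0" if "k + 2 \<le> 2*n" for k
    using ortho[of k] that momf[of k] by auto
  have mu: "\<mu> \<noteq> 0"
  proof
    assume "\<mu> = 0"
    have "A = 0 \<and> B = 0"
    proof (rule mom_kernel[OF dA dB])
      fix k assume "k < 2*n"
      hence "k + 2 \<le> 2*n \<or> k = 2*n-1" by auto
      thus "Mom n A B k = 0" using low \<open>\<mu> = 0\<close> \<mu>_def by auto
    qed
    hence "p = 0" by (simp add: B_def)
    have "((\<lambda>t. f n t * f n t) has_integral 0) {-1..1}"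
      by (rule has_integral_spike_finite[of "{-1,0,1}" _ _ "\<lambda>t. 0::real"]) (auto simp: fQ LA_Q_def \<open>A=0 \<and> B=0\<close>)
    hence "integral {-1..1} (\<lambda>t. f n t * f n t) = 0" by (rule integral_unique)
    with norm show False by simp
  qed
  define A' where "A' = smult (1/\<mu>) A"
  define B' where "B' = smult (1/\<mu>) B"
  have T: "LA_typeI n n A' B'"
  proof -
    have "degree A' < n" unfolding A'_def using dA by (rule le_less_trans[OF degree_smult_le])
    moreover have "degree B' < n" unfolding B'_def using dB by (rule le_less_trans[OF degree_smult_le])
    moreover have "\<forall>k. k + 2 \<le> 2*n \<longrightarrow> Mom n A' B' k = 0"
      unfolding A'_def B'_def Mom_smult using low by simp
    moreover have "Mom n A' B' (2*n-1) = 1"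
      unfolding A'_def B'_def Mom_smult \<mu>_def[symmetric] using mu by simp
    ultimately show ?thesis unfolding LA_typeI_iff[OF n] by blast
  qed
  have THE: "(THE AB. LA_typeI n n (fst AB) (snd AB)) = (A', B')"
  proof (rule the_equality)
    show "LA_typeI n n (fst (A',B')) (snd (A',B'))" using T by simp
    fix AB assume "LA_typeI n n (fst AB) (snd AB)"
    from LA_unique[OF n this T] show "AB = (A',B')" by (cases AB) auto
  qed
  have LAA: "LA_A n n = A'" and LAB: "LA_B n n = B'"
    by (simp_all add: LA_A_def LA_B_def THE)
  have ae: "AE x in lborel. x \<noteq> -1 \<and> x \<noteq> 0 \<and> x \<noteq> (1::real)"
    using AE_lborel_singleton[of "-1::real"] AE_lborel_singleton[of "0::real"]
      AE_lborel_singleton[of "1::real"] by eventually_elim auto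
  show ?thesis
  proof (intro exI[of _ \<mu>] conjI)
    show "AE x in lborel. x \<in> {-1..1} \<longrightarrow>
              f n x = \<mu> * (poly (LA_A n n) x * indicator {-1..<0} x
                           + poly (LA_B n n) x * indicator {0..<1} x)"
      using ae
    proof eventually_elim
      case (elim x)
      show ?case
      proof
        assume x: "x \<in> {-1..1}"
        hence "f n x = LA_Q A B x" using elim by (intro fQ) auto
        thus "f n x = \<mu> * (poly (LA_A n n) x * indicator {-1..<0} x
                           + poly (LA_B n n) x * indicator {0..<1} x)"
        proof (cases "x < 0")
          case True
          hence "LA_Q A B x = poly A x" using x by (simp add: LA_Q_def)
          moreover have "poly (LA_A n n) x * indicator {-1..<0} x
                           + poly (LA_B n n) x * indicator {0..<1} x = poly A x / \<mu>"
            using True x by (simp add: LAA LAB A'_def B'_def indicator_def)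
          ultimately show ?thesis using \<open>f n x = LA_Q A B x\<close> mu by simp
        next
          case False
          hence "x > 0" "x < 1" using elim x by auto
          hence "LA_Q A B x = poly B x" by (simp add: LA_Q_def)
          moreover have "poly (LA_A n n) x * indicator {-1..<0} x
                           + poly (LA_B n n) x * indicator {0..<1} x = poly B x / \<mu>"
            using \<open>x>0\<close> \<open>x<1\<close> by (simp add: LAA LAB A'_def B'_def indicator_def)
          ultimately show ?thesis using \<open>f n x = LA_Q A B x\<close> mu by simp
        qed
      qed
    qed
  qed (fact mu)
qed

end
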